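(* Assume $\Phi$ is an involution. Let $\overline\pi\in\arg\min_{\pi\in\mathcal{C}_{\mathrm{coh}}\cap\Pi}\mathbb{E}_{x\sim\mathcal{D}_{\mathcal{X}}}[\mathsf{B}_F(\pi(x)\parallel\pi^*(x))]$ be the Bregman projection of $\pi^*$ onto $\mathcal{C}_{\mathrm{coh}}\cap\Pi$ and $\epsilon=\mathbb{E}_{x\sim\mathcal{D}_{\mathcal{X}}}[\mathsf{B}_F(\pi^*(x)\parallel\overline\pi(x))]$. Let $\widehat\pi$ be the solution of $\min_{\pi\in\mathcal{C}_{\mathrm{coh}}\cap\Pi}\mathbb{E}_{x\sim\mathcal{D}_{\mathcal{X}}}[\mathsf{B}_F(\pi(x)\parallel\pi_0(x))]$. Then (all expectations over $x\sim\mathcal{D}_{\mathcal{X}}$) $$\mathbb{E}[\mathsf{B}_F(\pi^*(x)\parallel\widehat\pi(x))]-\mathbb{E}[\mathsf{B}_F(\pi^*(x)\parallel\pi_0(x))]\le-\mathbb{E}[\mathsf{B}_F(\widehat\pi(x)\parallel\pi_0(x))]+\mathbb{E}\big[\langle\pi^*(x)-\overline\pi(x),\nabla F(\pi_0(x))-\nabla F(\widehat\pi(x))\rangle\big].$$ If $F$ is $\mu$-strongly convex with respect to a norm $\|\cdot\|$ (dual norm $\|\cdot\|_*$), then $$\mathbb{E}[\mathsf{B}_F(\pi^*(x)\parallel\widehat\pi(x))]-\mathbb{E}[\mathsf{B}_F(\pi^*(x)\parallel\pi_0(x))]\le-\mathbb{E}[\mathsf{B}_F(\widehat\pi(x)\parallel\pi_0(x))]+\sqrt{\tfrac{2\epsilon}{\mu}}\sqrt{\mathbb{E}\big[\|\nabla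 F(\pi_0(x))-\nabla F(\widehat\pi(x))\|_*^2\big]}.$$ If furthermore $F$ is $L$-smooth, then with $D=\mathbb{E}[\mathsf{B}_F(\widehat\pi(x)\parallel\pi_0(x))]$, $$\mathbb{E}[\mathsf{B}_F(\pi^*(x)\parallel\widehat\pi(x))]-\mathbb{E}[\mathsf{B}_F(\pi^*(x)\parallel\pi_0(x))]\le-D+\frac{2L}{\mu}\sqrt{\epsilon D},$$ and the right-hand side is strictly negative whenever $\epsilon<\big(\frac{\mu}{2L}\big)^2D$.
   Context: $\mathcal{X},\mathcal{Y}$ finite; models are maps $\pi\colon\mathcal{X}\to\Delta(\mathcal{Y})$, $\Pi_{\mathrm{all}}=\Delta(\mathcal{Y})^{\mathcal{X}}$; $\Pi\subseteq\Pi_{\mathrm{all}}$ closed and convex; $\pi_0\in\Pi_{\mathrm{all}}$ baseline; $\pi^*\colon\mathcal{X}\to\Delta(\mathcal{Y})$ a reference model (not assumed coherent); $\mathcal{D}_{\mathcal{X}}$ a full-support distribution on $\mathcal{X}$. $\Phi\colon\mathcal{X}\to\mathcal{X}$ and $\mathcal{C}_{\mathrm{coh}}=\{\pi\in\Pi_{\mathrm{all}}:\pi(x)=\pi(\Phi(x))\ \forall x\}$. $F$ is convex, differentiable on the interior of its domain (which contains $\Delta(\mathcal{Y})$, all relevant values lying where $\nabla F$ is defined), $\mathsf{B}_F(p\parallel q)=F(p)-F(q)-\langle\nabla F(q),p-q\rangle$. $\mu$-strong convexity: $\mathsf{B}_F(p\parallel q)\ge\frac{\mu}{2}\|p-q\|^2$;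 $L$-smoothness: $\|\nabla F(p)-\nabla F(q)\|_*\le L\|p-q\|$. *)

theory Defs
  imports "HOL-Analysis.Analysis" "HOL-Probability.Probability"
begin

definition prob_simplex :: "(real^'y::finite) set" where
  "prob_simplex = {p. (\<forall>y. 0 \<le> p $ y) \<and> (\<Sum>y\<in>UNIV. p $ y) = 1}"

definition Pi_all :: "('x::finite \<Rightarrow> real^'y::finite) set" where
  "Pi_all = {\<pi>. \<forall>x. \<pi> x \<in> prob_simplex}"

definition models_convex :: "('x \<Rightarrow> real^'y::finite) set \<Rightarrow> bool" where
  "models_convex P \<longleftrightarrow> (\<forall>\<pi>\<in>P. \<forall>\<sigma>\<in>P. \<forall>t::real. 0 \<le> t \<and> t \<le> 1 \<longrightarrow>
      (\<lambda>x. (1 - t) *\<^sub>R \<pi> x + t *\<^sub>R \<sigma> x) \<in> P)"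

definition C_coh :: "('x::finite \<Rightarrow> 'x) \<Rightarrow> ('x \<Rightarrow> real^'y::finite) set" where
  "C_coh \<Phi> = {\<pi>\<in>Pi_all. \<forall>x. \<pi> x = \<pi> (\<Phi> x)}"

definition bregman :: "((real^'y::finite) \<Rightarrow> real) \<Rightarrow> ((real^'y) \<Rightarrow> real^'y) \<Rightarrow> real^'y \<Rightarrow> real^'y \<Rightarrow> real" where
  "bregman F gradF p q = F p - F q - gradF q \<bullet> (p - q)"

definition Ex :: "'x pmf \<Rightarrow> ('x \<Rightarrow> real) \<Rightarrow> real" where
  "Ex D f = measure_pmf.expectation D f"

definition is_norm :: "((real^'y::finite) \<Rightarrow> real) \<Rightarrow> bool" where
  "is_norm N \<longleftrightarrow> (\<forall>v. 0 \<le> N v) \<and> (\<forall>v. N v = 0 \<longleftrightarrow> v = 0)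
     \<and> (\<forall>c v. N (c *\<^sub>R v) = \<bar>c\<bar> * N v) \<and> (\<forall>u v. N (u + v) \<le> N u + N v)"

definition dual_norm :: "((real^'y::finite) \<Rightarrow> real) \<Rightarrow> real^'y \<Rightarrow> real" where
  "dual_norm N g = (SUP v\<in>{v. N v \<le> 1}. g \<bullet> v)"

end

theory Submission
  imports Defs
begin


lemma Ex_sum: "Ex (D::'x::finite pmf) f = (\<Sum>x\<in>UNIV. pmf D x * f x)"
  unfolding Ex_def by (subst integral_measure_pmf[of UNIV]) auto

lemma norm_lower:
  fixes N :: "real^'y::finite \<Rightarrow> real"
  assumes "is_norm N"
  shows "\<exists>m>0. \<forall>v. m * norm v \<le> N v"
proof -
  have pos: "\<And>v. 0 \<le> N v" and z: "\<And>v. N v = 0 \<longleftrightarrow> v = 0"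
    and hom: "\<And>c v. N (c *\<^sub>R v) = \<bar>c\<bar> * N v" and tri: "\<And>u v. N (u + v) \<le> N u + N v"
    using assms unfolding is_norm_def by auto
  have cvx: "convex_on UNIV N"
  proof (rule convex_onI)
    fix t :: real and x y :: "real^'y" assume "t > 0" "t < 1"
    then show "N ((1 - t) *\<^sub>R x + t *\<^sub>R y) \<le> (1 - t) * N x + t * N y"
      using tri[of "(1 - t) *\<^sub>R x" "t *\<^sub>R y"] hom[of "1-t" x] hom[of t y] by simp
  qed simp
  have cont: "continuous_on UNIV N" by (rule convex_on_continuous[OF open_UNIV cvx])
  have ne: "sphere (0::real^'y) 1 \<noteq> {}" by simp
  obtain v0 where v0: "v0 \<in> sphere 0 1" "\<And>y. y \<in> sphere 0 1 \<Longrightarrow> N v0 \<le> N y"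
    using continuous_attains_inf[OF compact_sphere ne continuous_on_subset[OF cont]] by blast
  have "v0 \<noteq> 0" using v0(1) by auto
  hence mpos: "N v0 > 0" using pos z by (metis less_eq_real_def)
  show ?thesis
  proof (intro exI[of _ "N v0"] conjI allI mpos)
    fix v :: "real^'y"
    show "N v0 * norm v \<le> N v"
    proof (cases "v = 0")
      case True then show ?thesis using z pos by simp
    next
      case False
      have "N v0 \<le> N (v /\<^sub>R norm v)" using v0(2)[of "v /\<^sub>R norm v"] False by simp
      also have "N (v /\<^sub>R norm v) = N v / norm v" using hom[of "inverse (norm v)" v] by (simp add: divide_inverse mult.commute)
      finally show ?thesis using False by (simp add: field_simps)
    qed
  qed
qed

lemma inner_le_dual:
  fixes N :: "real^'y::finite \<Rightarrow> real"
  assumes "is_norm N"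
  shows "a \<bullet> g \<le> N a * dual_norm N g"
proof -
  have pos: "\<And>v. 0 \<le> N v" and z: "\<And>v. N v = 0 \<longleftrightarrow> v = 0"
    and hom: "\<And>c v. N (c *\<^sub>R v) = \<bar>c\<bar> * N v"
    using assms unfolding is_norm_def by auto
  obtain m where m: "m > 0" "\<And>v. m * norm v \<le> N v" using norm_lower[OF assms] by blast
  have bdd: "bdd_above ((\<lambda>v. g \<bullet> v) ` {v. N v \<le> 1})"
  proof (rule bdd_aboveI2)
    fix v assume "v \<in> {v. N v \<le> 1}"
    hence "m * norm v \<le> 1" using m(2)[of v] by simp
    hence nv: "norm v \<le> 1 / m" using m(1) by (simp add: field_simps)
    have "g \<bullet> v \<le> norm g * norm v" using Cauchy_Schwarz_ineq2[of g v] by linarith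
    also have "\<dots> \<le> norm g * (1/m)" using nv by (intro mult_left_mono) auto
    finally show "g \<bullet> v \<le> norm g / m" by simp
  qed
  show ?thesis
  proof (cases "a = 0")
    case True then show ?thesis using z[of 0] by simp
  next
    case False
    hence Na: "N a > 0" using pos z by (metis less_eq_real_def)
    let ?b = "a /\<^sub>R N a"
    have "N ?b = 1" using hom[of "inverse (N a)" a] Na by (simp add: divide_inverse)
    hence "g \<bullet> ?b \<le> dual_norm N g" unfolding dual_norm_def by (intro cSUP_upper bdd) simp
    moreover have "a \<bullet> g = N a * (g \<bullet> ?b)" using Na by (simp add: inner_commute)
    ultimately show ?thesis using Na by (simp add: mult_left_mono)
  qed
qed

lemma cs_weighted:
  fixes w a b :: "'x \<Rightarrow> real"
  assumes "\<And>x. 0 \<le> w x"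
  shows "(\<Sum>x\<in>A. w x * (a x * b x)) \<le> sqrt (\<Sum>x\<in>A. w x * (a x)\<^sup>2) * sqrt (\<Sum>x\<in>A. w x * (b x)\<^sup>2)"
proof -
  have "(\<Sum>x\<in>A. (sqrt (w x) * a x) * (sqrt (w x) * b x))\<^sup>2 \<le> (\<Sum>x\<in>A. (sqrt (w x) * a x)\<^sup>2) * (\<Sum>x\<in>A. (sqrt (w x) * b x)\<^sup>2)"
    by (rule Cauchy_Schwarz_ineq_sum)
  moreover have "\<And>x. (sqrt (w x) * a x) * (sqrt (w x) * b x) = w x * (a x * b x)"
    using assms by (simp add: algebra_simps)
  moreover have "\<And>x c. (sqrt (w x) * c)\<^sup>2 = w x * c\<^sup>2"
    using assms by (simp add: power_mult_distrib)
  ultimately have "(\<Sum>x\<in>A. w x * (a x * b x))\<^sup>2 \<le> (\<Sum>x\<in>A. w x * (a x)\<^sup>2) * (\<Sum>x\<in>A. w x * (b x)\<^sup>2)" by simp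
  hence "\<bar>\<Sum>x\<in>A. w x * (a x * b x)\<bar> \<le> sqrt ((\<Sum>x\<in>A. w x * (a x)\<^sup>2) * (\<Sum>x\<in>A. w x * (b x)\<^sup>2))"
    using real_le_rsqrt by (metis real_sqrt_abs real_sqrt_le_mono)
  thus ?thesis by (simp add: real_sqrt_mult)
qed

lemma dir_deriv:
  fixes F :: "real^'y::finite \<Rightarrow> real"
  assumes "(F has_derivative (\<lambda>h. G \<bullet> h)) (at p)"
  shows "((\<lambda>t. (F (p + t *\<^sub>R d) - F p) / t) \<longlongrightarrow> G \<bullet> d) (at_right 0)"
proof -
  have h1: "((\<lambda>t::real. p + t *\<^sub>R d) has_derivative (\<lambda>t. t *\<^sub>R d)) (at 0)"
    by (auto intro!: derivative_eq_intros)
  have h2: "(F has_derivative (\<lambda>h. G \<bullet> h)) (at (p + 0 *\<^sub>R d))" using assms by simp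
  have "((\<lambda>t. F (p + t *\<^sub>R d)) has_derivative (\<lambda>t. G \<bullet> (t *\<^sub>R d))) (at 0)"
    using has_derivative_compose[OF h1 h2] by (simp add: o_def)
  hence "((\<lambda>t. F (p + t *\<^sub>R d)) has_field_derivative (G \<bullet> d)) (at 0)"
    unfolding has_field_derivative_def by (simp add: mult.commute[of _ "G \<bullet> d"])
  hence "((\<lambda>h. (F (p + (0 + h) *\<^sub>R d) - F (p + 0 *\<^sub>R d)) / h) \<longlongrightarrow> G \<bullet> d) (at 0)"
    unfolding DERIV_def .
  hence "((\<lambda>t. (F (p + t *\<^sub>R d) - F p) / t) \<longlongrightarrow> G \<bullet> d) (at 0)" by simp
  thus ?thesis by (rule tendsto_mono[OF at_le, rotated]) simp
qed


lemma dual_nonneg: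
  fixes N :: "real^'y::finite \<Rightarrow> real"
  assumes "is_norm N"
  shows "0 \<le> dual_norm N g"
proof -
  have pos: "\<And>v. 0 \<le> N v" and z: "\<And>v. N v = 0 \<longleftrightarrow> v = 0"
    and hom: "\<And>c v. N (c *\<^sub>R v) = \<bar>c\<bar> * N v"
    using assms unfolding is_norm_def by auto
  define a :: "real^'y" where "a = axis undefined 1"
  have "a \<noteq> 0" unfolding a_def by simp
  hence Na: "N a > 0" using pos z by (metis less_eq_real_def)
  have "N (-a) = N a" using hom[of "-1" a] by simp
  hence "a \<bullet> g + (-a) \<bullet> g \<le> 2 * N a * dual_norm N g"
    using inner_le_dual[OF assms, of a g] inner_le_dual[OF assms, of "-a" g] by simp
  hence "0 \<le> N a * dual_norm N g" by simp
  thus ?thesis using Na by (simp add: zero_le_mult_iff)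
qed

lemma optimality:
  fixes S :: "('x::finite \<Rightarrow> real^'y::finite) set" and F :: "real^'y \<Rightarrow> real"
  assumes seg: "\<And>t. 0 \<le> t \<Longrightarrow> t \<le> 1 \<Longrightarrow> (\<lambda>x. (1 - t) *\<^sub>R a x + t *\<^sub>R b x) \<in> S"
    and mn: "\<And>\<pi>. \<pi> \<in> S \<Longrightarrow> (\<Sum>x\<in>UNIV. w x * bregman F gradF (a x) (q x))
                \<le> (\<Sum>x\<in>UNIV. w x * bregman F gradF (\<pi> x) (q x))"
    and grad: "\<And>x. (F has_derivative (\<lambda>h. gradF (a x) \<bullet> h)) (at (a x))"
  shows "(\<Sum>x\<in>UNIV. w x * ((b x - a x) \<bullet> (gradF (q x) - gradF (a x)))) \<le> 0"
proof -
  define d where "d x = b x - a x" for x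
  define Q where "Q t = (\<Sum>x\<in>UNIV. w x * ((F (a x + t *\<^sub>R d x) - F (a x)) / t - gradF (q x) \<bullet> d x))" for t
  have Qnn: "0 \<le> Q t" if t: "0 < t" "t \<le> 1" for t
  proof -
    have eq: "\<And>x. (1 - t) *\<^sub>R a x + t *\<^sub>R b x = a x + t *\<^sub>R d x"
      by (simp add: d_def algebra_simps)
    have "(\<Sum>x\<in>UNIV. w x * bregman F gradF (a x) (q x))
                \<le> (\<Sum>x\<in>UNIV. w x * bregman F gradF (a x + t *\<^sub>R d x) (q x))"
      using mn[OF seg[of t]] t by (simp only: eq)
    moreover have "t * Q t = (\<Sum>x\<in>UNIV. w x * bregman F gradF (a x + t *\<^sub>R d x) (q x))
        - (\<Sum>x\<in>UNIV. w x * bregman F gradF (a x) (q x))"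
      unfolding Q_def sum_distrib_left sum_subtractf[symmetric]
      by (rule sum.cong) (use t in \<open>auto simp: bregman_def inner_diff_right inner_add_right field_simps\<close>)
    ultimately have "0 \<le> t * Q t" by simp
    thus ?thesis using t by (simp add: zero_le_mult_iff)
  qed
  have lim: "(Q \<longlongrightarrow> (\<Sum>x\<in>UNIV. w x * (gradF (a x) \<bullet> d x - gradF (q x) \<bullet> d x))) (at_right 0)"
    unfolding Q_def
    by (intro tendsto_sum tendsto_mult tendsto_const tendsto_diff dir_deriv grad)
  have ev: "eventually (\<lambda>t. 0 \<le> Q t) (at_right (0::real))"
    unfolding eventually_at_right_field using Qnn by (intro exI[of _ 1]) auto
  have "0 \<le> (\<Sum>x\<in>UNIV. w x * (gradF (a x) \<bullet> d x - gradF (q x) \<bullet> d x))"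
    by (rule tendsto_lowerbound[OF lim ev]) simp
  moreover have "(\<Sum>x\<in>UNIV. w x * ((b x - a x) \<bullet> (gradF (q x) - gradF (a x))))
     = - (\<Sum>x\<in>UNIV. w x * (gradF (a x) \<bullet> d x - gradF (q x) \<bullet> d x))"
    unfolding sum_negf[symmetric] by (rule sum.cong) (auto simp: d_def inner_diff algebra_simps inner_commute)
  ultimately show ?thesis by simp
qed



theorem theorem2:
  fixes \<Phi> :: "'x::finite \<Rightarrow> 'x"
    and Pi :: "('x \<Rightarrow> real^'y::finite) set"
    and \<pi>0 \<pi>star \<pi>bar \<pi>hat :: "'x \<Rightarrow> real^'y"
    and Dx :: "'x pmf"
    and F :: "real^'y \<Rightarrow> real" and gradF :: "real^'y \<Rightarrow> real^'y"
    and K :: "(real^'y) set"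
    and N :: "real^'y \<Rightarrow> real" and \<mu> L :: real
  assumes invol: "\<And>x. \<Phi> (\<Phi> x) = x"
    and Pi_sub: "Pi \<subseteq> Pi_all" and Pi_closed: "closed Pi" and Pi_convex: "models_convex Pi"
    and pi0: "\<pi>0 \<in> Pi_all"
    and pistar: "\<forall>x. \<pi>star x \<in> prob_simplex"
    and Dx_full: "set_pmf Dx = UNIV"
    and K_convex: "convex K" and simplex_K: "prob_simplex \<subseteq> K"
    and F_convex: "convex_on K F"
    and F_grad: "\<And>p. p \<in> interior K \<Longrightarrow> (F has_derivative (\<lambda>h. gradF p \<bullet> h)) (at p)"
    and pibar_min: "\<pi>bar \<in> C_coh \<Phi> \<inter> Pi"
      "\<And>\<pi>. \<pi> \<in> C_coh \<Phi> \<inter> Pi \<Longrightarrow>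
         Ex Dx (\<lambda>x. bregman F gradF (\<pi>bar x) (\<pi>star x)) \<le> Ex Dx (\<lambda>x. bregman F gradF (\<pi> x) (\<pi>star x))"
    and pihat_min: "\<pi>hat \<in> C_coh \<Phi> \<inter> Pi"
      "\<And>\<pi>. \<pi> \<in> C_coh \<Phi> \<inter> Pi \<Longrightarrow>
         Ex Dx (\<lambda>x. bregman F gradF (\<pi>hat x) (\<pi>0 x)) \<le> Ex Dx (\<lambda>x. bregman F gradF (\<pi> x) (\<pi>0 x))"
    and relevant: "\<And>x. \<pi>0 x \<in> interior K" "\<And>x. \<pi>hat x \<in> interior K"
      "\<And>x. \<pi>star x \<in> interior K" "\<And>x. \<pi>bar x \<in> interior K"
  shows
   "(let \<epsilon> = Ex Dx (\<lambda>x. bregman F gradF (\<pi>star x) (\<pi>bar x));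
         D = Ex Dx (\<lambda>x. bregman F gradF (\<pi>hat x) (\<pi>0 x));
         lhs = Ex Dx (\<lambda>x. bregman F gradF (\<pi>star x) (\<pi>hat x))
               - Ex Dx (\<lambda>x. bregman F gradF (\<pi>star x) (\<pi>0 x))
     in lhs \<le> - D + Ex Dx (\<lambda>x. (\<pi>star x - \<pi>bar x) \<bullet> (gradF (\<pi>0 x) - gradF (\<pi>hat x)))
      \<and> ((is_norm N \<and> 0 < \<mu> \<and>
           (\<forall>p\<in>K. \<forall>q\<in>interior K. bregman F gradF p q \<ge> \<mu> / 2 * (N (p - q))\<^sup>2)) \<longrightarrow>
          lhs \<le> - D + sqrt (2 * \<epsilon> / \<mu>)
                  * sqrt (Ex Dx (\<lambda>x. (dual_norm N (gradF (\<pi>0 x) - gradF (\<pi>hat x)))\<^sup>2))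
          \<and> ((0 < L \<and> (\<forall>p\<in>interior K. \<forall>q\<in>interior K.
                  dual_norm N (gradF p - gradF q) \<le> L * N (p - q))) \<longrightarrow>
               lhs \<le> - D + 2 * L / \<mu> * sqrt (\<epsilon> * D)
               \<and> (\<epsilon> < (\<mu> / (2 * L))\<^sup>2 * D \<longrightarrow> - D + 2 * L / \<mu> * sqrt (\<epsilon> * D) < 0))))"
  proof -
  let ?w = "\<lambda>x. pmf Dx x"
  let ?B = "bregman F gradF"
  let ?g = "\<lambda>x. gradF (\<pi>0 x) - gradF (\<pi>hat x)"
  have w0: "\<And>x. 0 \<le> ?w x" by simp
  have hatPi: "\<pi>hat \<in> Pi" and barPi: "\<pi>bar \<in> Pi" using pihat_min(1) pibar_min(1) by auto
  have hatC: "\<pi>hat \<in> C_coh \<Phi>" and barC: "\<pi>bar \<in> C_coh \<Phi>" using pihat_min(1) pibar_min(1) by auto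
  have seg: "(\<lambda>x. (1 - t) *\<^sub>R \<pi>hat x + t *\<^sub>R \<pi>bar x) \<in> C_coh \<Phi> \<inter> Pi" if t: "0 \<le> t" "t \<le> 1" for t
  proof
    show "(\<lambda>x. (1 - t) *\<^sub>R \<pi>hat x + t *\<^sub>R \<pi>bar x) \<in> Pi"
      using Pi_convex hatPi barPi t unfolding models_convex_def by blast
    have sx: "(1 - t) *\<^sub>R \<pi>hat x + t *\<^sub>R \<pi>bar x \<in> prob_simplex" for x
    proof -
      have a: "\<pi>hat x \<in> prob_simplex" "\<pi>bar x \<in> prob_simplex"
        using hatC barC unfolding C_coh_def Pi_all_def by auto
      have "(\<Sum>y\<in>UNIV. ((1 - t) *\<^sub>R \<pi>hat x + t *\<^sub>R \<pi>bar x) $ y)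
          = (1 - t) * (\<Sum>y\<in>UNIV. \<pi>hat x $ y) + t * (\<Sum>y\<in>UNIV. \<pi>bar x $ y)"
        by (simp add: sum.distrib sum_distrib_left)
      also have "\<dots> = 1" using a unfolding prob_simplex_def by simp
      finally show ?thesis using a t unfolding prob_simplex_def by simp
    qed
    show "(\<lambda>x. (1 - t) *\<^sub>R \<pi>hat x + t *\<^sub>R \<pi>bar x) \<in> C_coh \<Phi>"
      using hatC barC sx unfolding C_coh_def Pi_all_def by auto
  qed
  have opt: "(\<Sum>x\<in>UNIV. ?w x * ((\<pi>bar x - \<pi>hat x) \<bullet> (gradF (\<pi>0 x) - gradF (\<pi>hat x)))) \<le> 0"
  proof (rule optimality[where S = "C_coh \<Phi> \<inter> Pi"])
    show "\<And>t. 0 \<le> t \<Longrightarrow> t \<le> 1 \<Longrightarrow> (\<lambda>x. (1 - t) *\<^sub>R \<pi>hat x + t *\<^sub>R \<pi>bar x) \<in> C_coh \<Phi> \<inter> Pi"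
      by (rule seg)
    show "\<And>\<pi>. \<pi> \<in> C_coh \<Phi> \<inter> Pi \<Longrightarrow> (\<Sum>x\<in>UNIV. ?w x * ?B (\<pi>hat x) (\<pi>0 x))
                \<le> (\<Sum>x\<in>UNIV. ?w x * ?B (\<pi> x) (\<pi>0 x))"
      using pihat_min(2) by (simp add: Ex_sum)
    show "\<And>x. (F has_derivative (\<lambda>h. gradF (\<pi>hat x) \<bullet> h)) (at (\<pi>hat x))"
      using F_grad relevant(2) by blast
  qed
  define eps where "eps = Ex Dx (\<lambda>x. ?B (\<pi>star x) (\<pi>bar x))"
  define D where "D = Ex Dx (\<lambda>x. ?B (\<pi>hat x) (\<pi>0 x))"
  define lhs where "lhs = Ex Dx (\<lambda>x. ?B (\<pi>star x) (\<pi>hat x)) - Ex Dx (\<lambda>x. ?B (\<pi>star x) (\<pi>0 x))"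
  define E1 where "E1 = Ex Dx (\<lambda>x. (\<pi>star x - \<pi>bar x) \<bullet> ?g x)"
  define Ed where "Ed = Ex Dx (\<lambda>x. (dual_norm N (?g x))\<^sup>2)"
  have lhs_eq: "lhs = - D + E1 + (\<Sum>x\<in>UNIV. ?w x * ((\<pi>bar x - \<pi>hat x) \<bullet> ?g x))"
  proof -
    have "(\<Sum>x\<in>UNIV. ?w x * ?B (\<pi>star x) (\<pi>hat x)) = (\<Sum>x\<in>UNIV. - (?w x * ?B (\<pi>hat x) (\<pi>0 x))
       + ?w x * ((\<pi>star x - \<pi>bar x) \<bullet> ?g x) + ?w x * ((\<pi>bar x - \<pi>hat x) \<bullet> ?g x) + ?w x * ?B (\<pi>star x) (\<pi>0 x))"
      by (rule sum.cong) (auto simp: bregman_def inner_diff algebra_simps inner_commute)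
    thus ?thesis unfolding lhs_def D_def E1_def Ex_sum by (simp add: sum.distrib sum_negf sum_subtractf)
  qed
  have part1: "lhs \<le> - D + E1" using lhs_eq opt by simp
  have part2: "lhs \<le> - D + sqrt (2 * eps / \<mu>) * sqrt Ed
      \<and> ((0 < L \<and> (\<forall>p\<in>interior K. \<forall>q\<in>interior K. dual_norm N (gradF p - gradF q) \<le> L * N (p - q))) \<longrightarrow>
           lhs \<le> - D + 2 * L / \<mu> * sqrt (eps * D)
           \<and> (eps < (\<mu> / (2 * L))\<^sup>2 * D \<longrightarrow> - D + 2 * L / \<mu> * sqrt (eps * D) < 0))"
    if SC: "is_norm N" "0 < \<mu>" "\<forall>p\<in>K. \<forall>q\<in>interior K. ?B p q \<ge> \<mu> / 2 * (N (p - q))\<^sup>2"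
  proof -
    have intK: "\<And>x. \<pi>hat x \<in> K" "\<And>x. \<pi>star x \<in> K"
      using relevant interior_subset by blast+
    have Nsym: "N (\<pi>0 x - \<pi>hat x) = N (\<pi>hat x - \<pi>0 x)" for x
      using SC(1) unfolding is_norm_def by (metis abs_neg_one minus_diff_eq mult_1 scaleR_minus1_left)
    have sqN: "(N (p - q))\<^sup>2 \<le> 2 / \<mu> * ?B p q" if "p \<in> K" "q \<in> interior K" for p q
      using SC(3) that SC(2) by (auto simp: field_simps)
    have Bnn: "0 \<le> ?B p q" if "p \<in> K" "q \<in> interior K" for p q
      using SC(3) that SC(2) by (smt (verit) zero_le_power2 zero_le_divide_iff mult_nonneg_nonneg)
    have eps0: "0 \<le> eps" unfolding eps_def Ex_sum
      by (intro sum_nonneg mult_nonneg_nonneg w0 Bnn intK relevant)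
    have D0: "0 \<le> D" unfolding D_def Ex_sum
      by (intro sum_nonneg mult_nonneg_nonneg w0 Bnn intK relevant)
    have "E1 \<le> (\<Sum>x\<in>UNIV. ?w x * (N (\<pi>star x - \<pi>bar x) * dual_norm N (?g x)))"
      unfolding E1_def Ex_sum by (intro sum_mono mult_left_mono inner_le_dual SC(1) w0)
    also have "\<dots> \<le> sqrt (\<Sum>x\<in>UNIV. ?w x * (N (\<pi>star x - \<pi>bar x))\<^sup>2) * sqrt Ed"
      unfolding Ed_def Ex_sum by (rule cs_weighted) simp
    also have "\<dots> \<le> sqrt (2 * eps / \<mu>) * sqrt Ed"
    proof (intro mult_right_mono real_sqrt_le_mono)
      have "(\<Sum>x\<in>UNIV. ?w x * (N (\<pi>star x - \<pi>bar x))\<^sup>2) \<le> (\<Sum>x\<in>UNIV. ?w x * (2 / \<mu> * ?B (\<pi>star x) (\<pi>bar x)))"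
        by (intro sum_mono mult_left_mono sqN intK relevant w0)
      also have "\<dots> = 2 * eps / \<mu>" unfolding eps_def Ex_sum
        by (simp add: sum_distrib_left sum_divide_distrib algebra_simps)
      finally show "(\<Sum>x\<in>UNIV. ?w x * (N (\<pi>star x - \<pi>bar x))\<^sup>2) \<le> 2 * eps / \<mu>" .
    qed (simp add: Ed_def Ex_sum sum_nonneg)
    finally have p2: "lhs \<le> - D + sqrt (2 * eps / \<mu>) * sqrt Ed" using part1 by simp
    have p3: "lhs \<le> - D + 2 * L / \<mu> * sqrt (eps * D)
           \<and> (eps < (\<mu> / (2 * L))\<^sup>2 * D \<longrightarrow> - D + 2 * L / \<mu> * sqrt (eps * D) < 0)"
      if LS: "0 < L" "\<forall>p\<in>interior K. \<forall>q\<in>interior K. dual_norm N (gradF p - gradF q) \<le> L * N (p - q)"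
    proof
      have "Ed \<le> (\<Sum>x\<in>UNIV. ?w x * (L\<^sup>2 * (2 / \<mu> * ?B (\<pi>hat x) (\<pi>0 x))))"
        unfolding Ed_def Ex_sum
      proof (intro sum_mono mult_left_mono w0)
        fix x
        have "(dual_norm N (?g x))\<^sup>2 \<le> (L * N (\<pi>0 x - \<pi>hat x))\<^sup>2"
          using LS(2) relevant(1,2) by (intro power_mono dual_nonneg SC(1)) auto
        also have "\<dots> = L\<^sup>2 * (N (\<pi>hat x - \<pi>0 x))\<^sup>2" by (simp add: Nsym power_mult_distrib)
        also have "\<dots> \<le> L\<^sup>2 * (2 / \<mu> * ?B (\<pi>hat x) (\<pi>0 x))"
          by (intro mult_left_mono sqN intK relevant) simp
        finally show "(dual_norm N (?g x))\<^sup>2 \<le> L\<^sup>2 * (2 / \<mu> * ?B (\<pi>hat x) (\<pi>0 x))" .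
      qed
      also have "\<dots> = L\<^sup>2 * 2 * D / \<mu>" unfolding D_def Ex_sum
        by (simp add: sum_distrib_left sum_divide_distrib algebra_simps)
      finally have Ed_le: "Ed \<le> L\<^sup>2 * 2 * D / \<mu>" .
      have "sqrt (2 * eps / \<mu>) * sqrt Ed \<le> sqrt (2 * eps / \<mu>) * sqrt (L\<^sup>2 * 2 * D / \<mu>)"
        using Ed_le eps0 SC(2) by (intro mult_left_mono real_sqrt_le_mono) auto
      also have "\<dots> = sqrt ((2 * L / \<mu>)\<^sup>2 * (eps * D))"
        unfolding real_sqrt_mult[symmetric] using SC(2) by (simp add: field_simps power2_eq_square)
      also have "\<dots> = 2 * L / \<mu> * sqrt (eps * D)"
        using SC(2) LS(1) by (simp add: real_sqrt_mult)
      finally show "lhs \<le> - D + 2 * L / \<mu> * sqrt (eps * D)" using p2 by simp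
      show "eps < (\<mu> / (2 * L))\<^sup>2 * D \<longrightarrow> - D + 2 * L / \<mu> * sqrt (eps * D) < 0"
      proof
        assume lt: "eps < (\<mu> / (2 * L))\<^sup>2 * D"
        have Dp: "0 < D" using lt eps0 D0 by (smt (verit) mult_eq_0_iff)
        have "eps * D < ((\<mu> / (2 * L)) * D)\<^sup>2"
        proof -
          have "eps * D < (\<mu> / (2 * L))\<^sup>2 * D * D" by (rule mult_strict_right_mono[OF lt Dp])
          thus ?thesis by (simp add: power2_eq_square algebra_simps)
        qed
        hence "sqrt (eps * D) < \<mu> / (2 * L) * D"
          using Dp SC(2) LS(1) by (metis real_sqrt_less_mono real_sqrt_abs abs_of_pos divide_pos_pos mult_pos_pos zero_less_numeral)
        hence "2 * L / \<mu> * sqrt (eps * D) < 2 * L / \<mu> * (\<mu> / (2 * L) * D)"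
          using SC(2) LS(1) by (intro mult_strict_left_mono) auto
        also have "\<dots> = D" using SC(2) LS(1) by (simp add: field_simps)
        finally show "- D + 2 * L / \<mu> * sqrt (eps * D) < 0" by simp
      qed
    qed
    show ?thesis using p2 p3 by blast
  qed
  show ?thesis
    unfolding Let_def
    using part1 part2 unfolding eps_def D_def lhs_def E1_def Ed_def by blast
qed

end
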